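(* Let $n\ge1$ and let $\mathbb X$, $\mathbb Y$ be disjoint sets of variables with $|\mathbb X|=|\mathbb Y|=k>n$. Then the homotopy category of finitely generated graded matrix factorizations $\mathrm{HMF}(\mathrm{Sym}(\mathbb X|\mathbb Y),\Sigma\mathbb X^{n+1}-\Sigma\mathbb Y^{n+1})$ is trivial (every object is isomorphic to $0$).
   Context: $\mathrm{Sym}(\mathbb X|\mathbb Y)$ is the ring of complex polynomials in $\mathbb X\cup\mathbb Y$ symmetric in $\mathbb X$ and in $\mathbb Y$ separately, i.e. the polynomial ring in the elementary symmetric polynomials $X_1,\dots,X_k,Y_1,\dots,Y_k$, graded with variables of positive degree; $\Sigma\mathbb X^{n+1}=\sum_{x\in\mathbb X}x^{n+1}$. For a regular local graded ring $S$ and homogeneous $w$ of degree $d>0$ in the homogeneous maximal ideal, a graded matrix factorization of type $(S,w)$ is $M^0\xrightarrow fM^{-1}\xrightarrow gM^0$ with $M^0,M^{-1}$ finitely generated free graded modules, $f$ of degree $d$, $g$ of degree $0$, $gf=fg=w$; $\mathrm{HMF}(S,w)$ is the category of these modulo homotopy (null-homotopies $D^0:M^0\to N^{-1}$ of degree $0$, $D^{-1}:M^{-1}\to N^0$ of degree $-d$ with $g'D^0+D^{-1}f=\alpha$, $f'D^{-1}+D^0g=\beta$). *)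

theory Defs
  imports Complex_Main "HOL-Library.Poly_Mapping"
begin

text \<open>Multiplication is convolution.\<close>
type_synonym mpoly = "(nat \<Rightarrow>\<^sub>0 nat) \<Rightarrow>\<^sub>0 complex"

definition Var :: "nat \<Rightarrow> mpoly" where
  "Var i = Poly_Mapping.single (Poly_Mapping.single i 1) 1"

definition const :: "complex \<Rightarrow> mpoly" where
  "const a = Poly_Mapping.single 0 a"

definition mdeg :: "(nat \<Rightarrow> nat) \<Rightarrow> (nat \<Rightarrow>\<^sub>0 nat) \<Rightarrow> int" where
  "mdeg wt m = int (\<Sum>v\<in>Poly_Mapping.keys m. Poly_Mapping.lookup m v * wt v)"

text \<open>Homogeneous of degree e (0 is homogeneous of every degree).\<close>
definition homog :: "(nat \<Rightarrow> nat) \<Rightarrow> int \<Rightarrow> mpoly \<Rightarrow> bool" where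
  "homog wt e p \<longleftrightarrow> (\<forall>m\<in>Poly_Mapping.keys p. mdeg wt m = e)"

definition in_ring :: "nat set \<Rightarrow> mpoly \<Rightarrow> bool" where
  "in_ring V p \<longleftrightarrow> (\<forall>m\<in>Poly_Mapping.keys p. Poly_Mapping.keys m \<subseteq> V)"

definition subst :: "(nat \<Rightarrow> mpoly) \<Rightarrow> mpoly \<Rightarrow> mpoly" where
  "subst \<sigma> p = (\<Sum>m\<in>Poly_Mapping.keys p. const (Poly_Mapping.lookup p m) * (\<Prod>v\<in>Poly_Mapping.keys m. \<sigma> v ^ Poly_Mapping.lookup m v))"

definition elem_sym :: "nat set \<Rightarrow> nat \<Rightarrow> mpoly" where
  "elem_sym A i = (\<Sum>T\<in>{T. T \<subseteq> A \<and> card T = i}. \<Prod>j\<in>T. Var j)"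

definition power_sum :: "nat set \<Rightarrow> nat \<Rightarrow> mpoly" where
  "power_sum A m = (\<Sum>j\<in>A. Var j ^ m)"

type_synonym mat = "nat \<Rightarrow> nat \<Rightarrow> mpoly"

definition mmul :: "nat \<Rightarrow> mat \<Rightarrow> mat \<Rightarrow> mat" where
  "mmul r A B = (\<lambda>i j. \<Sum>l<r. A i l * B l j)"

definition madd :: "mat \<Rightarrow> mat \<Rightarrow> mat" where
  "madd A B = (\<lambda>i j. A i j + B i j)"

definition msub :: "mat \<Rightarrow> mat \<Rightarrow> mat" where
  "msub A B = (\<lambda>i j. A i j - B i j)"

definition mscal :: "mpoly \<Rightarrow> mat" where
  "mscal w = (\<lambda>i j. if i = j then w else 0)"

definition mid :: mat where "mid = mscal 1"

definition meq :: "nat \<Rightarrow> nat \<Rightarrow> mat \<Rightarrow> mat \<Rightarrow> bool" where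
  "meq rows cols A B \<longleftrightarrow> (\<forall>i<rows. \<forall>j<cols. A i j = B i j)"

text \<open>A finitely generated free graded module S(-a_0) + ... + S(-a_(r-1)) is given by its
  rank r and the degrees a of its basis elements.  A homogeneous S-linear map of degree e
  from (rs, ds) to (rt, dt) is a rt x rs matrix A over S whose entry A i j is homogeneous
  of degree ds j + e - dt i.\<close>
definition hmap :: "nat set \<Rightarrow> (nat \<Rightarrow> nat) \<Rightarrow> nat \<Rightarrow> (nat \<Rightarrow> int) \<Rightarrow> nat \<Rightarrow> (nat \<Rightarrow> int)
    \<Rightarrow> int \<Rightarrow> mat \<Rightarrow> bool" where
  "hmap V wt rs ds rt dt e A \<longleftrightarrow>
     (\<forall>i<rt. \<forall>j<rs. in_ring V (A i j) \<and> homog wt (ds j + e - dt i) (A i j))"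

record mf =
  rk0 :: nat
  dg0 :: "nat \<Rightarrow> int"
  rk1 :: nat
  dg1 :: "nat \<Rightarrow> int"
  mf_f :: mat
  mf_g :: mat

text \<open>Graded matrix factorization M^0 --f--> M^{-1} --g--> M^0 of type (S, w),
  f of degree d, g of degree 0, gf = w, fg = w.\<close>
definition is_mf :: "nat set \<Rightarrow> (nat \<Rightarrow> nat) \<Rightarrow> int \<Rightarrow> mpoly \<Rightarrow> mf \<Rightarrow> bool" where
  "is_mf V wt d w M \<longleftrightarrow>
     hmap V wt (rk0 M) (dg0 M) (rk1 M) (dg1 M) d (mf_f M) \<and>
     hmap V wt (rk1 M) (dg1 M) (rk0 M) (dg0 M) 0 (mf_g M) \<and>
     meq (rk0 M) (rk0 M) (mmul (rk1 M) (mf_g M) (mf_f M)) (mscal w) \<and>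
     meq (rk1 M) (rk1 M) (mmul (rk0 M) (mf_f M) (mf_g M)) (mscal w)"

text \<open>Morphism (alpha, beta): M -> N, alpha: M^0 -> N^0, beta: M^{-1} -> N^{-1}, degree 0,
  commuting with f and g.\<close>
definition mf_mor :: "nat set \<Rightarrow> (nat \<Rightarrow> nat) \<Rightarrow> mf \<Rightarrow> mf \<Rightarrow> mat \<times> mat \<Rightarrow> bool" where
  "mf_mor V wt M N \<phi> \<longleftrightarrow>
     hmap V wt (rk0 M) (dg0 M) (rk0 N) (dg0 N) 0 (fst \<phi>) \<and>
     hmap V wt (rk1 M) (dg1 M) (rk1 N) (dg1 N) 0 (snd \<phi>) \<and>
     meq (rk1 N) (rk0 M) (mmul (rk0 N) (mf_f N) (fst \<phi>)) (mmul (rk1 M) (snd \<phi>) (mf_f M)) \<and>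
     meq (rk0 N) (rk1 M) (mmul (rk1 N) (mf_g N) (snd \<phi>)) (mmul (rk0 M) (fst \<phi>) (mf_g M))"

text \<open>Null-homotopy: D0: M^0 -> N^{-1} of degree 0, D1: M^{-1} -> N^0 of degree -d with
  g' D0 + D1 f = alpha and f' D1 + D0 g = beta.\<close>
definition null_htpc :: "nat set \<Rightarrow> (nat \<Rightarrow> nat) \<Rightarrow> int \<Rightarrow> mf \<Rightarrow> mf \<Rightarrow> mat \<times> mat \<Rightarrow> bool" where
  "null_htpc V wt d M N \<phi> \<longleftrightarrow>
     (\<exists>D0 D1. hmap V wt (rk0 M) (dg0 M) (rk1 N) (dg1 N) 0 D0 \<and>
              hmap V wt (rk1 M) (dg1 M) (rk0 N) (dg0 N) (- d) D1 \<and>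
              meq (rk0 N) (rk0 M) (madd (mmul (rk1 N) (mf_g N) D0) (mmul (rk1 M) D1 (mf_f M))) (fst \<phi>) \<and>
              meq (rk1 N) (rk1 M) (madd (mmul (rk0 N) (mf_f N) D1) (mmul (rk0 M) D0 (mf_g M))) (snd \<phi>))"

definition htpc :: "nat set \<Rightarrow> (nat \<Rightarrow> nat) \<Rightarrow> int \<Rightarrow> mf \<Rightarrow> mf \<Rightarrow> mat \<times> mat \<Rightarrow> mat \<times> mat \<Rightarrow> bool" where
  "htpc V wt d M N \<phi> \<psi> \<longleftrightarrow> null_htpc V wt d M N (msub (fst \<phi>) (fst \<psi>), msub (snd \<phi>) (snd \<psi>))"

definition mf_comp :: "mf \<Rightarrow> mat \<times> mat \<Rightarrow> mat \<times> mat \<Rightarrow> mat \<times> mat" where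
  "mf_comp N \<psi> \<phi> = (mmul (rk0 N) (fst \<psi>) (fst \<phi>), mmul (rk1 N) (snd \<psi>) (snd \<phi>))"

definition hmf_iso :: "nat set \<Rightarrow> (nat \<Rightarrow> nat) \<Rightarrow> int \<Rightarrow> mf \<Rightarrow> mf \<Rightarrow> bool" where
  "hmf_iso V wt d M N \<longleftrightarrow>
     (\<exists>\<phi> \<psi>. mf_mor V wt M N \<phi> \<and> mf_mor V wt N M \<psi> \<and>
        htpc V wt d M M (mf_comp N \<psi> \<phi>) (mid, mid) \<and>
        htpc V wt d N N (mf_comp M \<phi> \<psi>) (mid, mid))"

definition zero_mf :: mf where
  "zero_mf = \<lparr>rk0 = 0, dg0 = (\<lambda>_. 0), rk1 = 0, dg1 = (\<lambda>_. 0), mf_f = (\<lambda>_ _. 0), mf_g = (\<lambda>_ _. 0)\<rparr>"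

end

theory Submission
  imports Defs
begin

abbreviation lk where "lk \<equiv> Poly_Mapping.lookup"
abbreviation ks where "ks \<equiv> Poly_Mapping.keys"
abbreviation sg where "sg \<equiv> Poly_Mapping.single"

lemma lookup_minus_nat: "lk ((a::nat\<Rightarrow>\<^sub>0nat) - b) v = lk a v - lk b v"
  by (simp add: lookup_minus)

lemma sum_monomials: "(p::mpoly) = (\<Sum>a\<in>ks p. sg a (lk p a))"
proof (rule poly_mapping_eqI)
  fix k
  show "lk p k = lk (\<Sum>a\<in>ks p. sg a (lk p a)) k"
    by (cases "k \<in> ks p") (auto simp: lookup_sum lookup_single when_def in_keys_iff sum.delta)
qed

lemma sum_keys_superset:
  assumes "finite S" "ks p \<subseteq> S" "\<And>m. g m 0 = 0"
  shows "(\<Sum>m\<in>ks p. g m (lk p m)) = (\<Sum>m\<in>S. g m (lk p m))"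
  by (rule sum.mono_neutral_left) (use assms in \<open>auto simp: in_keys_iff\<close>)



lemma mult_expand: "(p::mpoly) * q = (\<Sum>a\<in>ks p. \<Sum>b\<in>ks q. sg (a+b) (lk p a * lk q b))"
proof -
  have "p * q = (\<Sum>a\<in>ks p. sg a (lk p a)) * (\<Sum>b\<in>ks q. sg b (lk q b))"
    using sum_monomials[of p] sum_monomials[of q] by simp
  also have "\<dots> = (\<Sum>a\<in>ks p. \<Sum>b\<in>ks q. sg a (lk p a) * sg b (lk q b))"
    by (rule sum_product)
  finally show ?thesis by (simp add: mult_single)
qed

definition ev :: "(nat \<Rightarrow> complex) \<Rightarrow> (nat \<Rightarrow>\<^sub>0 nat) \<Rightarrow> complex" where
  "ev x m = (\<Prod>v\<in>ks m. x v ^ lk m v)"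
definition evp :: "(nat \<Rightarrow> complex) \<Rightarrow> mpoly \<Rightarrow> complex" where
  "evp x p = (\<Sum>m\<in>ks p. lk p m * ev x m)"

lemma ev_superset: "finite S \<Longrightarrow> ks m \<subseteq> S \<Longrightarrow> ev x m = (\<Prod>v\<in>S. x v ^ lk m v)"
  unfolding ev_def by (rule prod.mono_neutral_left) (auto simp: in_keys_iff)

lemma ev_add: "ev x (a + b) = ev x a * ev x b"
proof -
  let ?S = "ks a \<union> ks b"
  have "ks (a+b) \<subseteq> ?S" by (rule keys_add)
  then have "ev x (a+b) = (\<Prod>v\<in>?S. x v ^ lk (a+b) v)" by (intro ev_superset) auto
  also have "\<dots> = (\<Prod>v\<in>?S. x v ^ lk a v * x v ^ lk b v)" by (simp add: lookup_add power_add)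
  also have "\<dots> = ev x a * ev x b"
    by (simp add: prod.distrib ev_superset[of ?S a] ev_superset[of ?S b])
  finally show ?thesis .
qed

lemma ev_zero[simp]: "ev x 0 = 1" by (simp add: ev_def)

lemma evp_superset: "finite S \<Longrightarrow> ks p \<subseteq> S \<Longrightarrow> evp x p = (\<Sum>m\<in>S. lk p m * ev x m)"
  unfolding evp_def by (rule sum.mono_neutral_left) (auto simp: in_keys_iff)

lemma evp_add: "evp x (p + q) = evp x p + evp x q"
proof -
  let ?S = "ks p \<union> ks q"
  have "ks (p+q) \<subseteq> ?S" by (rule keys_add)
  then show ?thesis
    by (simp add: evp_superset[of ?S] lookup_add distrib_right sum.distrib)
qed

lemma evp_zero[simp]: "evp x 0 = 0" by (simp add: evp_def)

lemma evp_sum: "evp x (sum f A) = (\<Sum>a\<in>A. evp x (f a))"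
  by (induction A rule: infinite_finite_induct) (auto simp: evp_add)

lemma evp_single: "evp x (sg m a) = a * ev x m"
  by (simp add: evp_def)

lemma evp_mult: "evp x (p * q) = evp x p * evp x q"
proof -
  have "evp x (p * q) = (\<Sum>a\<in>ks p. \<Sum>b\<in>ks q. lk p a * ev x a * (lk q b * ev x b))"
    by (subst mult_expand) (simp add: evp_sum evp_single ev_add mult_ac)
  also have "\<dots> = evp x p * evp x q"
    by (simp add: evp_def sum_product)
  finally show ?thesis .
qed

lemma evp_uminus: "evp x (- p) = - evp x p"
  using evp_add[of x p "-p"] by (metis add.right_inverse evp_zero neg_eq_iff_add_eq_0)
lemma evp_diff: "evp x (p - q) = evp x p - evp x q"
  using evp_add[of x p "-q"] evp_uminus by simp

lemma evp_const: "evp x (const a) = a" by (simp add: const_def evp_single)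
lemma evp_one[simp]: "evp x 1 = 1" using evp_const[of x 1] by (simp add: const_def)
lemma evp_Var: "evp x (Var i) = x i" by (simp add: Var_def evp_single ev_def)

lemma evp_prod: "evp x (prod f A) = (\<Prod>a\<in>A. evp x (f a))"
  by (induction A rule: infinite_finite_induct) (auto simp: evp_mult)
lemma evp_power: "evp x (p ^ n) = evp x p ^ n"
  by (induction n) (auto simp: evp_mult)

lemma evp_subst: "evp x (subst \<sigma> p) = (\<Sum>m\<in>ks p. lk p m * (\<Prod>v\<in>ks m. evp x (\<sigma> v) ^ lk m v))"
  by (simp add: subst_def evp_sum evp_mult evp_const evp_prod evp_power)

definition pd :: "nat \<Rightarrow> mpoly \<Rightarrow> mpoly" where
  "pd i p = (\<Sum>m\<in>ks p. sg (m - sg i 1) (of_nat (lk m i) * lk p m))"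

lemma pd_superset: "finite S \<Longrightarrow> ks p \<subseteq> S \<Longrightarrow> pd i p = (\<Sum>m\<in>S. sg (m - sg i 1) (of_nat (lk m i) * lk p m))"
  unfolding pd_def by (rule sum.mono_neutral_left) (auto simp: in_keys_iff)

lemma pd_add: "pd i (p + q) = pd i p + pd i q"
proof -
  let ?S = "ks p \<union> ks q"
  have "ks (p+q) \<subseteq> ?S" by (rule keys_add)
  then show ?thesis
    by (simp add: pd_superset[of ?S] lookup_add distrib_left single_add sum.distrib)
qed

lemma pd_zero[simp]: "pd i 0 = 0" by (simp add: pd_def)

lemma pd_sum: "pd i (sum f A) = (\<Sum>a\<in>A. pd i (f a))"
  by (induction A rule: infinite_finite_induct) (auto simp: pd_add)

lemma pd_single: "pd i (sg m a) = sg (m - sg i 1) (of_nat (lk m i) * a)"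
  by (simp add: pd_def)

lemma shift_eq: "sg (a - sg i 1 + b) (of_nat (lk a i) * z) = sg (a + b - sg i 1) (of_nat (lk a i) * (z::complex))"
proof (cases "lk a i = 0")
  case False
  have "a - sg i 1 + b = a + b - sg i 1"
    by (rule poly_mapping_eqI) (use False in \<open>auto simp: lookup_add lookup_minus lookup_single when_def\<close>)
  then show ?thesis by simp
qed simp

lemma pd_mono: "pd i (sg a x * sg b y) = pd i (sg a x) * sg b y + sg a x * pd i (sg b y)"
proof -
  have 1: "pd i (sg a x) * sg b y = sg (a + b - sg i 1) (of_nat (lk a i) * (x * y))"
  proof -
    have "pd i (sg a x) * sg b y = sg (a - sg i 1 + b) (of_nat (lk a i) * (x*y))"
      by (simp only: pd_single mult_single) (simp add: mult_ac)
    also have "\<dots> = sg (a + b - sg i 1) (of_nat (lk a i) * (x*y))" by (rule shift_eq)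
    finally show ?thesis .
  qed
  have 2: "sg a x * pd i (sg b y) = sg (a + b - sg i 1) (of_nat (lk b i) * (x * y))"
  proof -
    have e: "a + (b - sg i 1) = b - sg i 1 + a" by (rule add.commute)
    have "sg a x * pd i (sg b y) = sg (b - sg i 1 + a) (of_nat (lk b i) * (x*y))"
      by (simp only: pd_single mult_single e) (simp add: mult_ac)
    also have "\<dots> = sg (b + a - sg i 1) (of_nat (lk b i) * (x*y))" by (rule shift_eq)
    finally show ?thesis by (simp add: add.commute)
  qed
  show ?thesis unfolding 1 2
    by (simp add: mult_single pd_single lookup_add single_add[symmetric] distrib_right)
qed

lemma pd_mult: "pd i (p * q) = pd i p * q + p * pd i q"
proof -
  have "pd i (p * q) = (\<Sum>a\<in>ks p. \<Sum>b\<in>ks q. pd i (sg a (lk p a) * sg b (lk q b)))"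
    by (subst mult_expand) (simp add: pd_sum mult_single)
  also have "\<dots> = (\<Sum>a\<in>ks p. \<Sum>b\<in>ks q. pd i (sg a (lk p a)) * sg b (lk q b))
                 + (\<Sum>a\<in>ks p. \<Sum>b\<in>ks q. sg a (lk p a) * pd i (sg b (lk q b)))"
    by (simp add: pd_mono sum.distrib)
  also have "\<dots> = pd i (\<Sum>a\<in>ks p. sg a (lk p a)) * (\<Sum>b\<in>ks q. sg b (lk q b))
                 + (\<Sum>a\<in>ks p. sg a (lk p a)) * pd i (\<Sum>b\<in>ks q. sg b (lk q b))"
    by (simp add: pd_sum sum_product)
  finally show ?thesis using sum_monomials[of p] sum_monomials[of q] by simp
qed

lemma pd_const: "pd i (const a) = 0" by (simp add: const_def pd_single)

lemma pd_const_mult: "pd i (const a * p) = const a * pd i p"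
  by (simp add: pd_mult pd_const)



lemma mdeg_superset: "finite S \<Longrightarrow> ks m \<subseteq> S \<Longrightarrow> mdeg wt m = int (\<Sum>v\<in>S. lk m v * wt v)"
  unfolding mdeg_def by (subst sum.mono_neutral_left[of S]) (auto simp: in_keys_iff)

lemma mdeg_add: "mdeg wt (a + b) = mdeg wt a + mdeg wt b"
proof -
  let ?S = "ks a \<union> ks b"
  have "ks (a+b) \<subseteq> ?S" by (rule keys_add)
  then show ?thesis
    by (simp add: mdeg_superset[of ?S] lookup_add distrib_right sum.distrib)
qed

lemma mdeg_zero[simp]: "mdeg wt 0 = 0" by (simp add: mdeg_def)
lemma mdeg_single: "mdeg wt (sg i 1) = int (wt i)" by (simp add: mdeg_def)

lemma mdeg_eq0:
  assumes "\<And>v. wt v > 0" "mdeg wt m = 0" shows "m = 0"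
proof -
  have "(\<Sum>v\<in>ks m. lk m v * wt v) = 0" using assms(2) unfolding mdeg_def by (metis of_nat_eq_0_iff)
  then have "\<forall>v\<in>ks m. lk m v * wt v = 0" by (simp only: sum_eq_0_iff finite_keys)
  moreover have "\<forall>v\<in>ks m. lk m v * wt v \<noteq> 0" using assms(1) by (auto simp: in_keys_iff)
  ultimately have "ks m = {}" by blast
  then show ?thesis by simp
qed

lemma minus_add_single: "lk m i > 0 \<Longrightarrow> (m - sg i 1) + sg i 1 = (m :: nat \<Rightarrow>\<^sub>0 nat)"
  by (rule poly_mapping_eqI) (auto simp: lookup_add lookup_minus lookup_single when_def)

lemma mdeg_minus_single: "lk m i > 0 \<Longrightarrow> mdeg wt (m - sg i 1) = mdeg wt m - int (wt i)"
proof -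
  assume "lk m i > 0"
  then have "mdeg wt m = mdeg wt (m - sg i 1) + mdeg wt (sg i 1)"
    by (metis mdeg_add minus_add_single)
  then show ?thesis using mdeg_single[of wt i] by linarith
qed

lemma keys_minus_single: "ks (m - sg i 1) \<subseteq> ks (m :: nat \<Rightarrow>\<^sub>0 nat)"
  by (auto simp: in_keys_iff lookup_minus)

lemma keys_pd: "ks (pd i p) \<subseteq> {m - sg i 1 | m. m \<in> ks p \<and> lk m i > 0}"
proof -
  have "ks (pd i p) \<subseteq> (\<Union>m\<in>ks p. ks (sg (m - sg i 1) (of_nat (lk m i) * lk p m)))"
    unfolding pd_def by (rule keys_sum)
  also have "\<dots> \<subseteq> {m - sg i 1 | m. m \<in> ks p \<and> lk m i > 0}"
    by (auto split: if_splits)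
  finally show ?thesis .
qed

lemma homog_zero[simp]: "homog wt e 0" by (simp add: homog_def)
lemma homog_add: "homog wt e p \<Longrightarrow> homog wt e q \<Longrightarrow> homog wt e (p + q)"
  using keys_add[of p q] unfolding homog_def by blast
lemma homog_sum: "(\<And>a. a \<in> A \<Longrightarrow> homog wt e (f a)) \<Longrightarrow> homog wt e (sum f A)"
  by (induction A rule: infinite_finite_induct) (auto intro: homog_add)
lemma homog_mult: "homog wt a p \<Longrightarrow> homog wt b q \<Longrightarrow> homog wt (a + b) (p * q)"
  using keys_mult[of p q] unfolding homog_def by (force simp: mdeg_add)
lemma homog_const: "homog wt 0 (const a)" by (simp add: homog_def const_def)
lemma homog_const_mult: "homog wt e p \<Longrightarrow> homog wt e (const a * p)"
  using homog_mult[OF homog_const[of wt a], of e p] by simp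
lemma homog_pd: "homog wt e p \<Longrightarrow> homog wt (e - int (wt i)) (pd i p)"
proof -
  assume h: "homog wt e p"
  { fix x assume "x \<in> ks (pd i p)"
    then obtain m where "x = m - sg i 1" "m \<in> ks p" "lk m i > 0" using keys_pd[of i p] by blast
    moreover have "mdeg wt m = e" using h \<open>m \<in> ks p\<close> unfolding homog_def by blast
    ultimately have "mdeg wt x = e - int (wt i)" using mdeg_minus_single[of m i wt] by simp }
  then show ?thesis unfolding homog_def by blast
qed

lemma in_ring_add: "in_ring V p \<Longrightarrow> in_ring V q \<Longrightarrow> in_ring V (p + q)"
  using keys_add[of p q] unfolding in_ring_def by blast
lemma in_ring_mult: "in_ring V p \<Longrightarrow> in_ring V q \<Longrightarrow> in_ring V (p * q)"
proof -
  assume a: "in_ring V p" "in_ring V q"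
  { fix m assume "m \<in> ks (p*q)"
    then obtain x y where "m = x + y" "x \<in> ks p" "y \<in> ks q" using keys_mult[of p q] by blast
    then have "ks m \<subseteq> V" using a keys_add[of x y] unfolding in_ring_def by blast }
  then show ?thesis unfolding in_ring_def by blast
qed
lemma in_ring_const: "in_ring V (const a)" by (simp add: in_ring_def const_def)
lemma in_ring_pd: "in_ring V p \<Longrightarrow> in_ring V (pd i p)"
  using keys_pd[of i p] keys_minus_single unfolding in_ring_def by blast

lemma pd_homog_top:
  assumes pos: "\<And>v. wt v > 0" and h: "homog wt (int (wt i)) w"
  shows "pd i w = const (lk w (sg i 1))"
proof -
  have z: "sg (m - sg i 1) (of_nat (lk m i) * lk w m) = (if m = sg i 1 then sg 0 (lk w m) else 0)"
    if "m \<in> ks w" for m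
  proof (cases "lk m i = 0")
    case True
    then have "m \<noteq> sg i 1" by auto
    with True show ?thesis by simp
  next
    case False
    then have gt: "lk m i > 0" by simp
    moreover have "mdeg wt m = int (wt i)" using h that unfolding homog_def by blast
    ultimately have "mdeg wt (m - sg i 1) = 0" using mdeg_minus_single[of m i wt] by simp
    then have "m - sg i 1 = 0" using mdeg_eq0 pos by blast
    then have "m = sg i 1" using minus_add_single[of m i] gt by simp
    then show ?thesis by simp
  qed
  have "pd i w = (\<Sum>m\<in>ks w. if m = sg i 1 then sg 0 (lk w m) else 0)"
    unfolding pd_def by (rule sum.cong[OF refl], rule z)
  also have "\<dots> = const (lk w (sg i 1))"
    by (auto simp: const_def in_keys_iff)
  finally show ?thesis .
qed



definition rt :: "nat \<Rightarrow> nat \<Rightarrow> complex" where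
  "rt N j = cis (2 * pi * real j / real N)"

definition pt :: "nat \<Rightarrow> nat \<Rightarrow> complex" where
  "pt N j = (if j < N then rt N j else 0)"

lemma rt_bij: "N > 0 \<Longrightarrow> bij_betw (rt N) {..<N} {z. z ^ N = 1}"
  unfolding rt_def by (rule bij_betw_roots_unity)

lemma sum_subsets_R:
  fixes N i :: nat
  assumes N: "N > 0"
  shows "(\<Sum>T\<in>{T. T \<subseteq> {..<N} \<and> card T = i}. \<Prod>j\<in>T. rt N j)
       = (\<Sum>U\<in>{U. U \<subseteq> {z. z ^ N = 1} \<and> card U = i}. \<Prod>z\<in>U. z)"
proof -
  let ?R = "{z::complex. z ^ N = 1}"
  let ?g = "inv_into {..<N} (rt N)"
  have bij: "bij_betw (rt N) {..<N} ?R" using rt_bij[OF N] .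
  have inj: "inj_on (rt N) {..<N}" using bij by (rule bij_betw_imp_inj_on)
  have im: "rt N ` {..<N} = ?R" using bij by (rule bij_betw_imp_surj_on)
  show ?thesis
  proof (rule sum.reindex_bij_witness[where i="\<lambda>U. ?g ` U" and j="\<lambda>T. rt N ` T"])
    fix U assume U: "U \<in> {U. U \<subseteq> ?R \<and> card U = i}"
    show "rt N ` (?g ` U) = U" using image_inv_into_cancel[OF im] U by blast
    have sub: "?g ` U \<subseteq> {..<N}"
    proof
      fix y assume "y \<in> ?g ` U"
      then obtain x where x: "x \<in> U" "y = ?g x" by blast
      then have "x \<in> rt N ` {..<N}" using U im by auto
      then show "y \<in> {..<N}" using x inv_into_into by metis
    qed
    have "inj_on ?g U" using U im by (intro inj_on_inv_into) auto
    then show "?g ` U \<in> {T. T \<subseteq> {..<N} \<and> card T = i}"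
      using sub U by (simp add: card_image)
  next
    fix T assume T: "T \<in> {T. T \<subseteq> {..<N} \<and> card T = i}"
    show "?g ` rt N ` T = T" using T inj by simp
    have "inj_on (rt N) T" using inj T by (auto intro: inj_on_subset)
    then show "rt N ` T \<in> {U. U \<subseteq> ?R \<and> card U = i}"
      using T im by (auto simp: card_image)
    show "(\<Prod>z\<in>rt N ` T. z) = (\<Prod>j\<in>T. rt N j)"
      using \<open>inj_on (rt N) T\<close> by (simp add: prod.reindex)
  qed
qed

lemma sum_subsets_R_zero:
  fixes N i :: nat
  assumes N: "N > 0" and i: "0 < i" "i < N"
  shows "(\<Sum>U\<in>{U. U \<subseteq> {z::complex. z ^ N = 1} \<and> card U = i}. \<Prod>z\<in>U. z) = 0"
proof -
  let ?R = "{z::complex. z ^ N = 1}"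
  let ?U = "{U. U \<subseteq> ?R \<and> card U = i}"
  define S where "S = (\<Sum>U\<in>?U. \<Prod>z\<in>U. z)"
  define \<zeta> where "\<zeta> = rt N 1"
  have bij: "bij_betw (rt N) {..<N} ?R" using rt_bij[OF N] .
  have inj: "inj_on (rt N) {..<N}" using bij by (rule bij_betw_imp_inj_on)
  have im: "rt N ` {..<N} = ?R" using bij by (rule bij_betw_imp_surj_on)
  have "\<zeta> ^ N = cis (2*pi)" unfolding \<zeta>_def rt_def using N by (simp add: DeMoivre field_simps)
  also have "cis (2*pi) = 1" by (simp add: complex_eq_iff)
  finally have zR: "\<zeta> ^ N = 1" .
  have z0: "\<zeta> \<noteq> 0" using zR N by (metis power_0_left less_not_refl2 zero_neq_one)
  have zi: "\<zeta> ^ i = rt N i" unfolding \<zeta>_def rt_def by (simp add: DeMoivre mult_ac)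
  have "rt N i \<noteq> rt N 0" using inj i by (metis inj_on_contraD lessThan_iff N less_not_refl2)
  then have zi1: "\<zeta> ^ i \<noteq> 1" using zi by (simp add: rt_def)
  have "S = (\<Sum>U\<in>?U. \<Prod>z\<in>(\<lambda>z. \<zeta> * z) ` U. z)"
    unfolding S_def
  proof (rule sum.reindex_bij_witness[where j="\<lambda>U. (\<lambda>z. inverse \<zeta> * z) ` U" and i="\<lambda>U. (\<lambda>z. \<zeta> * z) ` U"])
    fix U assume U: "U \<in> ?U"
    show "(\<lambda>z. \<zeta> * z) ` (\<lambda>z. inverse \<zeta> * z) ` U = U" using z0 by (auto simp: image_image image_iff mult.assoc[symmetric])
    show "(\<lambda>z. inverse \<zeta> * z) ` U \<in> ?U"
    proof -
      have "inj_on (\<lambda>z. inverse \<zeta> * z) U" using z0 by (auto intro: inj_onI)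
      moreover have "(\<lambda>z. inverse \<zeta> * z) ` U \<subseteq> ?R" using U zR by (auto simp: power_mult_distrib power_inverse)
      ultimately show ?thesis using U by (simp add: card_image)
    qed
    show "(\<lambda>z. \<zeta> * z) ` U \<in> ?U"
    proof -
      have "inj_on (\<lambda>z. \<zeta> * z) U" using z0 by (auto intro: inj_onI)
      moreover have "(\<lambda>z. \<zeta> * z) ` U \<subseteq> ?R" using U zR by (auto simp: power_mult_distrib)
      ultimately show ?thesis using U by (simp add: card_image)
    qed
    show "(\<lambda>z. inverse \<zeta> * z) ` (\<lambda>z. \<zeta> * z) ` U = U" using z0 by (auto simp: image_image image_iff mult.assoc[symmetric])
    have "(\<lambda>z. \<zeta> * z) ` (\<lambda>z. inverse \<zeta> * z) ` U = U" using z0 by (auto simp: image_image image_iff mult.assoc[symmetric])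
    then show "(\<Prod>z\<in>(\<lambda>z. \<zeta> * z) ` (\<lambda>z. inverse \<zeta> * z) ` U. z) = (\<Prod>z\<in>U. z)" by simp
  qed
  also have "\<dots> = (\<Sum>U\<in>?U. \<zeta> ^ i * (\<Prod>z\<in>U. z))"
  proof (rule sum.cong[OF refl])
    fix U assume U: "U \<in> ?U"
    have "inj_on (\<lambda>z. \<zeta> * z) U" using z0 by (auto intro: inj_onI)
    then have "(\<Prod>z\<in>(\<lambda>z. \<zeta> * z) ` U. z) = (\<Prod>z\<in>U. \<zeta> * z)" by (simp add: prod.reindex)
    also have "\<dots> = \<zeta> ^ card U * (\<Prod>z\<in>U. z)" by (simp add: prod.distrib)
    finally show "(\<Prod>z\<in>(\<lambda>z. \<zeta> * z) ` U. z) = \<zeta> ^ i * (\<Prod>z\<in>U. z)" using U by simp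
  qed
  also have "\<dots> = \<zeta> ^ i * S" unfolding S_def by (simp add: sum_distrib_left)
  finally have "S = \<zeta> ^ i * S" .
  then have "(1 - \<zeta> ^ i) * S = 0" by (simp add: algebra_simps)
  then have "S = 0" using zi1 by simp
  then show ?thesis unfolding S_def by simp
qed

lemma pt_elem_sym_zero:
  fixes N k i :: nat
  assumes N: "N > 0" "N \<le> k" and i: "0 < i" "i < N"
  shows "(\<Sum>T\<in>{T. T \<subseteq> {..<k} \<and> card T = i}. \<Prod>j\<in>T. pt N j) = 0"
proof -
  have "(\<Sum>T\<in>{T. T \<subseteq> {..<k} \<and> card T = i}. \<Prod>j\<in>T. pt N j)
      = (\<Sum>T\<in>{T. T \<subseteq> {..<N} \<and> card T = i}. \<Prod>j\<in>T. pt N j)"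
  proof (rule sum.mono_neutral_right)
    show "finite {T. T \<subseteq> {..<k} \<and> card T = i}" by simp
    show "{T. T \<subseteq> {..<N} \<and> card T = i} \<subseteq> {T. T \<subseteq> {..<k} \<and> card T = i}" using N by auto
    show "\<forall>T\<in>{T. T \<subseteq> {..<k} \<and> card T = i} - {T. T \<subseteq> {..<N} \<and> card T = i}. (\<Prod>j\<in>T. pt N j) = 0"
    proof
      fix T assume T: "T \<in> {T. T \<subseteq> {..<k} \<and> card T = i} - {T. T \<subseteq> {..<N} \<and> card T = i}"
      then obtain j where "j \<in> T" "\<not> j < N" by auto
      moreover have "finite T" using T finite_subset by auto
      ultimately show "(\<Prod>j\<in>T. pt N j) = 0" by (auto simp: pt_def intro!: prod_zero)
    qed
  qed
  also have "\<dots> = (\<Sum>T\<in>{T. T \<subseteq> {..<N} \<and> card T = i}. \<Prod>j\<in>T. rt N j)"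
    by (intro sum.cong refl prod.cong) (auto simp: pt_def)
  also have "\<dots> = 0" using sum_subsets_R[OF N(1)] sum_subsets_R_zero[OF N(1) i] by simp
  finally show ?thesis .
qed

lemma pt_power_sum:
  fixes N k :: nat
  assumes N: "N > 0" "N \<le> k"
  shows "(\<Sum>j<k. pt N j ^ N) = of_nat N"
proof -
  have im: "rt N ` {..<N} = {z. z ^ N = 1}" using rt_bij[OF N(1)] by (rule bij_betw_imp_surj_on)
  have "(\<Sum>j<k. pt N j ^ N) = (\<Sum>j<N. pt N j ^ N)"
    by (rule sum.mono_neutral_right) (use N in \<open>auto simp: pt_def\<close>)
  also have "\<dots> = (\<Sum>j<N. 1)"
    by (rule sum.cong[OF refl]) (use im in \<open>auto simp: pt_def\<close>)
  finally show ?thesis by simp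
qed



lemma const_mult: "const a * const b = const (a * b)" by (simp add: const_def mult_single)
lemma const_neg1: "const (-1) = -1" by (simp add: const_def single_uminus)

lemma iso_zero:
  assumes "null_htpc V wt d M M (\<lambda>i j. - mid i j, \<lambda>i j. - mid i j)"
  shows "hmf_iso V wt d M zero_mf"
proof -
  let ?Z = "(\<lambda>_ _. 0 :: mpoly, \<lambda>_ _. 0 :: mpoly)"
  have 1: "mf_mor V wt M zero_mf ?Z" by (simp add: mf_mor_def hmap_def meq_def zero_mf_def)
  have 2: "mf_mor V wt zero_mf M ?Z" by (simp add: mf_mor_def hmap_def meq_def zero_mf_def)
  have 3: "htpc V wt d M M (mf_comp zero_mf ?Z ?Z) (mid, mid)"
    using assms by (simp add: htpc_def mf_comp_def mmul_def msub_def zero_mf_def)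
  have 4: "htpc V wt d zero_mf zero_mf (mf_comp M ?Z ?Z) (mid, mid)"
    by (simp add: htpc_def null_htpc_def hmap_def meq_def zero_mf_def)
  show ?thesis unfolding hmf_iso_def using 1 2 3 4 by blast
qed

lemma contractible:
  assumes mf: "is_mf V wt d w M" and wn: "int (wt i) = d"
    and pw: "pd i w = const u" and u: "u \<noteq> 0"
  shows "null_htpc V wt d M M (\<lambda>i j. - mid i j, \<lambda>i j. - mid i j)"
proof -
  let ?f = "mf_f M" and ?g = "mf_g M" and ?C = "const (- 1 / u)"
  define D0 where "D0 = (\<lambda>a b. ?C * pd i (?f a b))"
  define D1 where "D1 = (\<lambda>a b. ?C * pd i (?g a b))"
  have hf: "hmap V wt (rk0 M) (dg0 M) (rk1 M) (dg1 M) d ?f"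
   and hg: "hmap V wt (rk1 M) (dg1 M) (rk0 M) (dg0 M) 0 ?g"
   and gf: "meq (rk0 M) (rk0 M) (mmul (rk1 M) ?g ?f) (mscal w)"
   and fg: "meq (rk1 M) (rk1 M) (mmul (rk0 M) ?f ?g) (mscal w)"
    using mf unfolding is_mf_def by auto
  have h0: "hmap V wt (rk0 M) (dg0 M) (rk1 M) (dg1 M) 0 D0"
    unfolding hmap_def D0_def
  proof (intro allI impI conjI)
    fix a b assume ab: "a < rk1 M" "b < rk0 M"
    then have "in_ring V (?f a b)" "homog wt (dg0 M b + d - dg1 M a) (?f a b)"
      using hf unfolding hmap_def by auto
    moreover have "homog wt (dg0 M b + d - dg1 M a - int (wt i)) (pd i (?f a b))"
      by (rule homog_pd) fact
    then have "homog wt (dg0 M b + 0 - dg1 M a) (pd i (?f a b))" using wn by simp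
    ultimately show "in_ring V (?C * pd i (?f a b))" "homog wt (dg0 M b + 0 - dg1 M a) (?C * pd i (?f a b))"
      by (auto intro!: in_ring_mult in_ring_const in_ring_pd homog_const_mult)
  qed
  have h1: "hmap V wt (rk1 M) (dg1 M) (rk0 M) (dg0 M) (- d) D1"
    unfolding hmap_def D1_def
  proof (intro allI impI conjI)
    fix a b assume ab: "a < rk0 M" "b < rk1 M"
    then have "in_ring V (?g a b)" "homog wt (dg1 M b + 0 - dg0 M a) (?g a b)"
      using hg unfolding hmap_def by auto
    moreover have "homog wt (dg1 M b + 0 - dg0 M a - int (wt i)) (pd i (?g a b))"
      by (rule homog_pd) fact
    moreover have "dg1 M b + 0 - dg0 M a - int (wt i) = dg1 M b + - d - dg0 M a" using wn by simp
    ultimately have "homog wt (dg1 M b + - d - dg0 M a) (pd i (?g a b))" "in_ring V (?g a b)" by metis+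
    then show "in_ring V (?C * pd i (?g a b))" "homog wt (dg1 M b + - d - dg0 M a) (?C * pd i (?g a b))"
      by (auto intro!: in_ring_mult in_ring_const in_ring_pd homog_const_mult)
  qed
  have key: "?C * pd i (mscal w a b) = - mid a b" for a b
  proof -
    have "- (1 / u) * u = - 1" using u by simp
    then have c: "const (- (1 / u)) * const u = -1" by (simp only: const_mult const_neg1)
    show ?thesis by (simp add: mscal_def mid_def pw c)
  qed
  have e1: "meq (rk0 M) (rk0 M) (madd (mmul (rk1 M) ?g D0) (mmul (rk1 M) D1 ?f)) (\<lambda>i j. - mid i j)"
    unfolding meq_def
  proof (intro allI impI)
    fix a b assume ab: "a < rk0 M" "b < rk0 M"
    have "madd (mmul (rk1 M) ?g D0) (mmul (rk1 M) D1 ?f) a b = ?C * pd i (mmul (rk1 M) ?g ?f a b)"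
      by (simp add: madd_def mmul_def D0_def D1_def pd_sum pd_mult sum.distrib sum_distrib_left
           algebra_simps)
    also have "mmul (rk1 M) ?g ?f a b = mscal w a b" using gf ab unfolding meq_def by auto
    finally show "madd (mmul (rk1 M) ?g D0) (mmul (rk1 M) D1 ?f) a b = - mid a b" using key by simp
  qed
  have e2: "meq (rk1 M) (rk1 M) (madd (mmul (rk0 M) ?f D1) (mmul (rk0 M) D0 ?g)) (\<lambda>i j. - mid i j)"
    unfolding meq_def
  proof (intro allI impI)
    fix a b assume ab: "a < rk1 M" "b < rk1 M"
    have "madd (mmul (rk0 M) ?f D1) (mmul (rk0 M) D0 ?g) a b = ?C * pd i (mmul (rk0 M) ?f ?g a b)"
      by (simp add: madd_def mmul_def D0_def D1_def pd_sum pd_mult sum.distrib sum_distrib_left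
           algebra_simps)
    also have "mmul (rk0 M) ?f ?g a b = mscal w a b" using fg ab unfolding meq_def by auto
    finally show "madd (mmul (rk0 M) ?f D1) (mmul (rk0 M) D0 ?g) a b = - mid a b" using key by simp
  qed
  show ?thesis unfolding null_htpc_def using h0 h1 e1 e2 by auto
qed

lemma w_homog:
  assumes mf: "is_mf V wt d w M" and nz: "rk0 M > 0 \<or> rk1 M > 0"
  shows "homog wt d w"
proof -
  have hf: "hmap V wt (rk0 M) (dg0 M) (rk1 M) (dg1 M) d (mf_f M)"
   and hg: "hmap V wt (rk1 M) (dg1 M) (rk0 M) (dg0 M) 0 (mf_g M)"
   and gf: "meq (rk0 M) (rk0 M) (mmul (rk1 M) (mf_g M) (mf_f M)) (mscal w)"
   and fg: "meq (rk1 M) (rk1 M) (mmul (rk0 M) (mf_f M) (mf_g M)) (mscal w)"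
    using mf unfolding is_mf_def by auto
  show ?thesis
  proof (cases "rk0 M > 0")
    case True
    have "w = mmul (rk1 M) (mf_g M) (mf_f M) 0 0" using gf True by (simp add: meq_def mscal_def)
    also have "homog wt d \<dots>" unfolding mmul_def
    proof (rule homog_sum)
      fix l assume "l \<in> {..<rk1 M}"
      then have "homog wt (dg1 M l + 0 - dg0 M 0) (mf_g M 0 l)" "homog wt (dg0 M 0 + d - dg1 M l) (mf_f M l 0)"
        using hf hg True unfolding hmap_def by auto
      from homog_mult[OF this] show "homog wt d (mf_g M 0 l * mf_f M l 0)" by simp
    qed
    finally show ?thesis .
  next
    case False
    then have T: "rk1 M > 0" using nz by simp
    have "w = mmul (rk0 M) (mf_f M) (mf_g M) 0 0" using fg T by (simp add: meq_def mscal_def)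
    also have "homog wt d \<dots>" unfolding mmul_def
    proof (rule homog_sum)
      fix l assume "l \<in> {..<rk0 M}"
      then have "homog wt (dg0 M l + d - dg1 M 0) (mf_f M 0 l)" "homog wt (dg1 M 0 + 0 - dg0 M l) (mf_g M l 0)"
        using hf hg T unfolding hmap_def by auto
      from homog_mult[OF this] show "homog wt d (mf_f M 0 l * mf_g M l 0)" by simp
    qed
    finally show ?thesis .
  qed
qed

lemma trivial_mf:
  assumes "rk0 M = 0" "rk1 M = 0"
  shows "null_htpc V wt d M M (\<lambda>i j. - mid i j, \<lambda>i j. - mid i j)"
  using assms unfolding null_htpc_def hmap_def meq_def by auto



lemma evp_elem_sym: "evp x (elem_sym A i) = (\<Sum>T\<in>{T. T \<subseteq> A \<and> card T = i}. \<Prod>j\<in>T. x j)"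
  by (simp add: elem_sym_def evp_sum evp_prod evp_Var)

lemma evp_power_sum: "evp x (power_sum A m) = (\<Sum>j\<in>A. x j ^ m)"
  by (simp add: power_sum_def evp_sum evp_power evp_Var)

lemma coeff_nonzero:
  fixes n k c :: nat and w :: mpoly
  defines "wt \<equiv> (\<lambda>v. if v < k then c * (v + 1) else c * (v - k + 1))"
  defines "\<sigma> \<equiv> (\<lambda>v. if v < k then elem_sym {..<k} (v + 1) else elem_sym {k..<2*k} (v - k + 1))"
  assumes n1: "n \<ge> 1" and kn: "k > n" and c0: "c > 0"
    and h: "homog wt (int (c * (n + 1))) w"
    and sw: "subst \<sigma> w = power_sum {..<k} (n + 1) - power_sum {k..<2*k} (n + 1)"
  shows "lk w (sg n 1) \<noteq> 0"
proof
  assume w0: "lk w (sg n 1) = 0"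
  define N where "N = n + 1"
  have N: "N > 0" "N \<le> k" using kn by (auto simp: N_def)
  let ?x = "pt N"
  have pos: "\<And>v. wt v > 0" using c0 by (simp add: wt_def)
  have wtn: "wt n = c * (n + 1)" using kn by (simp add: wt_def)
  have zero_sig: "evp ?x (\<sigma> v) = 0" if "v < n \<or> v \<ge> k" for v
  proof (cases "v < n")
    case True
    then have "v < k" using kn by simp
    then have "evp ?x (\<sigma> v) = (\<Sum>T\<in>{T. T \<subseteq> {..<k} \<and> card T = v + 1}. \<Prod>j\<in>T. pt N j)"
      by (simp add: \<sigma>_def evp_elem_sym)
    also have "\<dots> = 0" using pt_elem_sym_zero[OF N, of "v+1"] True by (simp add: N_def)
    finally show ?thesis .
  next
    case False
    then have vk: "v \<ge> k" using that by simp
    then have "evp ?x (\<sigma> v) = (\<Sum>T\<in>{T. T \<subseteq> {k..<2*k} \<and> card T = v - k + 1}. \<Prod>j\<in>T. pt N j)"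
      by (simp add: \<sigma>_def evp_elem_sym)
    also have "\<dots> = 0"
    proof (rule sum.neutral, rule ballI)
      fix T assume T: "T \<in> {T. T \<subseteq> {k..<2*k} \<and> card T = v - k + 1}"
      then have "T \<noteq> {}" by auto
      then obtain j where j: "j \<in> T" by auto
      have "finite T" using T finite_subset[of T "{k..<2*k}"] by auto
      moreover have "pt N j = 0" using j T N by (auto simp: pt_def)
      ultimately show "(\<Prod>j\<in>T. pt N j) = 0" using j by (auto intro: prod_zero)
    qed
    finally show ?thesis .
  qed
  have term0: "lk w m * (\<Prod>v\<in>ks m. evp ?x (\<sigma> v) ^ lk m v) = 0" if m: "m \<in> ks w" for m
  proof -
    have md: "mdeg wt m = int (c * (n + 1))" using h m by (simp add: homog_def)
    have mne: "m \<noteq> sg n 1" using w0 m by (auto simp: in_keys_iff)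
    have "\<exists>v\<in>ks m. v < n \<or> v \<ge> k"
    proof (rule ccontr)
      assume "\<not> ?thesis"
      then have sub: "\<forall>v\<in>ks m. n \<le> v \<and> v < k" by auto
      have "ks m \<noteq> {}"
      proof
        assume "ks m = {}"
        then have "m = 0" by simp
        moreover have "c * (n + 1) \<noteq> 0" using c0 by simp
        ultimately show False using md by (metis mdeg_zero of_nat_eq_0_iff)
      qed
      then obtain v where v: "v \<in> ks m" by blast
      show False
      proof (cases "v = n")
        case True
        then have gt: "lk m n > 0" using v by (simp add: in_keys_iff)
        then have "mdeg wt (m - sg n 1) = 0" using mdeg_minus_single[of m n wt] md wtn by simp
        then have "m - sg n 1 = 0" using mdeg_eq0 pos by blast
        then have "m = sg n 1" using minus_add_single[of m n] gt by simp
        then show False using mne by simp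
      next
        case False
        then have vn: "v > n" "v < k" using sub v by auto
        have l1: "lk m v \<ge> 1" using v by (simp add: in_keys_iff)
        have "wt v = c * (v + 1)" using vn by (simp add: wt_def)
        moreover have "c * (v + 1) > c * (n + 1)" using vn c0 by simp
        ultimately have "c * (n + 1) < wt v" by simp
        also have "wt v \<le> lk m v * wt v" using l1 by simp
        also have "lk m v * wt v \<le> (\<Sum>u\<in>ks m. lk m u * wt u)"
          by (rule member_le_sum) (use v in auto)
        finally have "(\<Sum>u\<in>ks m. lk m u * wt u) > c * (n + 1)" .
        moreover have "(\<Sum>u\<in>ks m. lk m u * wt u) = c * (n + 1)"
          using md unfolding mdeg_def by (simp only: of_nat_eq_iff)
        ultimately show False by simp
      qed
    qed
    then obtain v where v: "v \<in> ks m" "v < n \<or> v \<ge> k" by blast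
    have "lk m v > 0" using v by (simp add: in_keys_iff)
    then have "evp ?x (\<sigma> v) ^ lk m v = 0" using zero_sig[OF v(2)] by simp
    then have "(\<Prod>v\<in>ks m. evp ?x (\<sigma> v) ^ lk m v) = 0"
      using v(1) by (intro prod_zero) auto
    then show ?thesis by simp
  qed
  have "evp ?x (subst \<sigma> w) = 0"
    by (simp only: evp_subst) (rule sum.neutral, use term0 in blast)
  moreover have "evp ?x (subst \<sigma> w) = of_nat N"
  proof -
    have a: "evp ?x (power_sum {..<k} (n + 1)) = of_nat N"
      using pt_power_sum[OF N] by (simp add: evp_power_sum N_def)
    have b: "evp ?x (power_sum {k..<2*k} (n + 1)) = 0"
      using N by (simp add: evp_power_sum pt_def)
    show ?thesis using a b sw by (simp add: evp_diff)
  qed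
  ultimately show False using N by simp
qed


theorem proposition3p4p5:
  fixes n k c :: nat and w :: mpoly
  assumes "n \<ge> 1" and "k > n" and "c > 0"
    and "in_ring {..<2*k} w"
    and "subst (\<lambda>v. if v < k then elem_sym {..<k} (v + 1) else elem_sym {k..<2*k} (v - k + 1)) w
           = power_sum {..<k} (n + 1) - power_sum {k..<2*k} (n + 1)"
  shows "\<forall>M. is_mf {..<2*k} (\<lambda>v. if v < k then c * (v + 1) else c * (v - k + 1))
                 (int (c * (n + 1))) w M \<longrightarrow>
             hmf_iso {..<2*k} (\<lambda>v. if v < k then c * (v + 1) else c * (v - k + 1))
                 (int (c * (n + 1))) M zero_mf"
proof (intro allI impI)
  fix M
  let ?wt = "\<lambda>v. if v < k then c * (v + 1) else c * (v - k + 1)"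
  assume mf: "is_mf {..<2*k} ?wt (int (c * (n + 1))) w M"
  show "hmf_iso {..<2*k} ?wt (int (c * (n + 1))) M zero_mf"
  proof (rule iso_zero)
    show "null_htpc {..<2*k} ?wt (int (c * (n + 1))) M M (\<lambda>i j. - mid i j, \<lambda>i j. - mid i j)"
    proof (cases "rk0 M = 0 \<and> rk1 M = 0")
      case True
      then show ?thesis by (intro trivial_mf) auto
    next
      case False
      then have h: "homog ?wt (int (c * (n + 1))) w"
        using w_homog[OF mf] by auto
      have u: "lk w (sg n 1) \<noteq> 0"
        using coeff_nonzero[OF assms(1,2,3) h assms(5)] .
      have wn: "int (?wt n) = int (c * (n + 1))" using assms(2) by simp
      have pos: "\<And>v. ?wt v > 0" using assms(3) by simp
      have h': "homog ?wt (int (?wt n)) w" using h wn by simp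
      have pw: "pd n w = const (lk w (sg n 1))" by (rule pd_homog_top[OF pos h'])
      show ?thesis by (rule contractible[OF mf wn pw u])
    qed
  qed
qed

end
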